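(* Let $(A,*,\{\cdot,\cdot,\cdot\})$ be a pre-Lie-Yamaguti algebra. Then for all $x,y,z,w,t\in A$: $$\{[x,y]_C,z,w\}_D+\{[y,z]_C,x,w\}_D+\{[z,x]_C,y,w\}_D=0,$$ and $$\{x,y,\{z,w,t\}_D\}_D-\{\{x,y,z\}_D,w,t\}_D-\{\{x,y,z\},w,t\}_D+\{\{y,x,z\},w,t\}_D-\{z,\{x,y,w\}_D,t\}_D-\{z,\{x,y,w\},t\}_D+\{z,\{y,x,w\},t\}_D-\{z,w,\{x,y,t\}_D\}_D=0.$$
   Context: All vector spaces are over a field of characteristic $0$. A pre-Lie-Yamaguti algebra is a vector space $A$ with a bilinear operation $*$ and a trilinear operation $\{\cdot,\cdot,\cdot\}$ such that, writing $[x,y]_C=x*y-y*x$, $(x,y,z)=(x*y)*z-x*(y*z)$ and $\{x,y,z\}_D=\{z,y,x\}-\{z,x,y\}+(y,x,z)-(x,y,z)$, for all $x,y,z,w,t\in A$: (P1) $\{z,[x,y]_C,w\}-\{y*z,x,w\}+\{x*z,y,w\}=0$; (P2) $\{x,y,[z,w]_C\}=z*\{x,y,w\}-w*\{x,y,z\}$; (P3) $\{\{x,y,z\},w,t\}-\{\{x,y,w\},z,t\}-\{x,y,\{z,w,t\}_D\}-\{x,y,\{z,w,t\}\}+\{x,y,\{w,z,t\}\}+\{z,w,\{x,y,t\}\}_D=0$; (P4) $\{z,\{x,y,w\}_D,t\}+\{z,\{x,y,w\},t\}-\{z,\{y,x,w\},t\}+\{z,w,\{x,y,t\}_D\}+\{z,w,\{x,y,t\}\}-\{z,w,\{y,x,t\}\}=\{x,y,\{z,w,t\}\}_D-\{\{x,y,z\}_D,w,t\}$;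 (P5) $\{x,y,z\}_D*w+\{x,y,z\}*w-\{y,x,z\}*w=\{x,y,z*w\}_D-z*\{x,y,w\}_D$. *)

theory Defs
  imports Complex_Main
begin

definition lin_in :: "('k::field \<Rightarrow> 'a::ab_group_add \<Rightarrow> 'a) \<Rightarrow> ('a \<Rightarrow> 'a) \<Rightarrow> bool" where
  "lin_in scale f \<longleftrightarrow> (\<forall>u v. f (u + v) = f u + f v) \<and> (\<forall>c u. f (scale c u) = scale c (f u))"

definition bilinear_op :: "('k::field \<Rightarrow> 'a::ab_group_add \<Rightarrow> 'a) \<Rightarrow> ('a \<Rightarrow> 'a \<Rightarrow> 'a) \<Rightarrow> bool" where
  "bilinear_op scale m \<longleftrightarrow> (\<forall>y. lin_in scale (\<lambda>x. m x y)) \<and> (\<forall>x. lin_in scale (\<lambda>y. m x y))"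

definition trilinear_op :: "('k::field \<Rightarrow> 'a::ab_group_add \<Rightarrow> 'a) \<Rightarrow> ('a \<Rightarrow> 'a \<Rightarrow> 'a \<Rightarrow> 'a) \<Rightarrow> bool" where
  "trilinear_op scale T \<longleftrightarrow> (\<forall>y z. lin_in scale (\<lambda>x. T x y z)) \<and> (\<forall>x z. lin_in scale (\<lambda>y. T x y z))
     \<and> (\<forall>x y. lin_in scale (\<lambda>z. T x y z))"

definition commC :: "('a \<Rightarrow> 'a \<Rightarrow> 'a) \<Rightarrow> 'a \<Rightarrow> 'a \<Rightarrow> 'a::ab_group_add" where
  "commC m x y = m x y - m y x"

definition assoc3 :: "('a \<Rightarrow> 'a \<Rightarrow> 'a) \<Rightarrow> 'a \<Rightarrow> 'a \<Rightarrow> 'a \<Rightarrow> 'a::ab_group_add" where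
  "assoc3 m x y z = m (m x y) z - m x (m y z)"

definition braceD :: "('a \<Rightarrow> 'a \<Rightarrow> 'a) \<Rightarrow> ('a \<Rightarrow> 'a \<Rightarrow> 'a \<Rightarrow> 'a) \<Rightarrow> 'a \<Rightarrow> 'a \<Rightarrow> 'a \<Rightarrow> 'a::ab_group_add" where
  "braceD m T x y z = T z y x - T z x y + assoc3 m y x z - assoc3 m x y z"

definition pre_LY :: "('k::field_char_0 \<Rightarrow> 'a::ab_group_add \<Rightarrow> 'a) \<Rightarrow> ('a \<Rightarrow> 'a \<Rightarrow> 'a) \<Rightarrow> ('a \<Rightarrow> 'a \<Rightarrow> 'a \<Rightarrow> 'a) \<Rightarrow> bool" where
  "pre_LY scale m T \<longleftrightarrow>
     vector_space scale \<and> bilinear_op scale m \<and> trilinear_op scale T \<and>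
     (\<forall>x y z w. T z (commC m x y) w - T (m y z) x w + T (m x z) y w = 0) \<and>
     (\<forall>x y z w. T x y (commC m z w) = m z (T x y w) - m w (T x y z)) \<and>
     (\<forall>x y z w t. T (T x y z) w t - T (T x y w) z t - T x y (braceD m T z w t) - T x y (T z w t)
                   + T x y (T w z t) + braceD m T z w (T x y t) = 0) \<and>
     (\<forall>x y z w t. T z (braceD m T x y w) t + T z (T x y w) t - T z (T y x w) t
                   + T z w (braceD m T x y t) + T z w (T x y t) - T z w (T y x t)
                   = braceD m T x y (T z w t) - T (braceD m T x y z) w t) \<and>
     (\<forall>x y z w. m (braceD m T x y z) w + m (T x y z) w - m (T y x z) w
                 = braceD m T x y (m z w) - m z (braceD m T x y w))"

end

theory Submission
  imports Defs
begin

lemma lin_add: "lin_in scale f \<Longrightarrow> f (u + v) = f u + f v"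
  by (simp add: lin_in_def)
lemma lin_diff: "lin_in scale f \<Longrightarrow> f (u - v) = f u - f v"
proof -
  assume a: "lin_in scale f"
  have "f (u - v) + f v = f u" using lin_add[OF a, of "u - v" v] by simp
  then show ?thesis by (simp add: eq_diff_eq)
qed
lemma lin_zero: "lin_in scale f \<Longrightarrow> f 0 = 0"
  using lin_diff[of scale f 0 0] by simp
lemma lin_minus: "lin_in scale f \<Longrightarrow> f (- u) = - f u"
  using lin_diff[of scale f 0 u] lin_zero[of scale f] by simp

theorem lemma3p8:
  fixes scale :: "'k::field_char_0 \<Rightarrow> 'a::ab_group_add \<Rightarrow> 'a"
    and m :: "'a \<Rightarrow> 'a \<Rightarrow> 'a" and T :: "'a \<Rightarrow> 'a \<Rightarrow> 'a \<Rightarrow> 'a"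
  assumes "pre_LY scale m T"
  shows "(\<forall>x y z w. braceD m T (commC m x y) z w + braceD m T (commC m y z) x w
                      + braceD m T (commC m z x) y w = 0) \<and>
         (\<forall>x y z w t. braceD m T x y (braceD m T z w t) - braceD m T (braceD m T x y z) w t
                      - braceD m T (T x y z) w t + braceD m T (T y x z) w t
                      - braceD m T z (braceD m T x y w) t - braceD m T z (T x y w) t
                      + braceD m T z (T y x w) t - braceD m T z w (braceD m T x y t) = 0)"
proof -
  note H = assms[unfolded pre_LY_def]
  have bm: "bilinear_op scale m"
    using H by (elim conjE) assumption
  have tt: "trilinear_op scale T"
    using H by (elim conjE) assumption
  have P1: "\<forall>x y z w. T z (commC m x y) w - T (m y z) x w + T (m x z) y w = 0"
    using H by (elim conjE) assumption
  have P2: "\<forall>x y z w. T x y (commC m z w) = m z (T x y w) - m w (T x y z)"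
    using H by (elim conjE) assumption
  have P3: "\<forall>x y z w t. T (T x y z) w t - T (T x y w) z t - T x y (braceD m T z w t) - T x y (T z w t)
                   + T x y (T w z t) + braceD m T z w (T x y t) = 0"
    using H by (elim conjE) assumption
  have P4: "\<forall>x y z w t. T z (braceD m T x y w) t + T z (T x y w) t - T z (T y x w) t
                   + T z w (braceD m T x y t) + T z w (T x y t) - T z w (T y x t)
                   = braceD m T x y (T z w t) - T (braceD m T x y z) w t"
    using H by (elim conjE) assumption
  have P5: "\<forall>x y z w. m (braceD m T x y z) w + m (T x y z) w - m (T y x z) w
                 = braceD m T x y (m z w) - m z (braceD m T x y w)"
    using H by (elim conjE) assumption
  have l1: "\<And>y. lin_in scale (\<lambda>x. m x y)" and l2: "\<And>x. lin_in scale (\<lambda>y. m x y)"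
    using bm unfolding bilinear_op_def by blast+
  have t1: "\<And>y z. lin_in scale (\<lambda>x. T x y z)" and t2: "\<And>x z. lin_in scale (\<lambda>y. T x y z)"
    and t3: "\<And>x y. lin_in scale (\<lambda>z. T x y z)"
    using tt unfolding trilinear_op_def by blast+
  note lin = lin_add[OF l1] lin_add[OF l2] lin_diff[OF l1] lin_diff[OF l2]
    lin_zero[OF l1] lin_zero[OF l2] lin_minus[OF l1] lin_minus[OF l2]
    lin_add[OF t1] lin_add[OF t2] lin_add[OF t3] lin_diff[OF t1] lin_diff[OF t2] lin_diff[OF t3]
    lin_zero[OF t1] lin_zero[OF t2] lin_zero[OF t3] lin_minus[OF t1] lin_minus[OF t2] lin_minus[OF t3]
  have A: "\<forall>x y z w. braceD m T (commC m x y) z w + braceD m T (commC m y z) x w + braceD m T (commC m z x) y w = 0"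
  proof (intro allI)
    fix x y z w
    have e0: "(T w z (commC m x y)) = (m x (T w z y)) - (m y (T w z x))" using P2[rule_format, where x=w and y=z and z=x and w=y] by simp
    have e1: "(T w (commC m x y) z) - (T (m y w) x z) + (T (m x w) y z) = 0" using P1[rule_format, where x=x and y=y and z=w and w=z] by simp
    have e2: "(T w x (commC m y z)) = (m y (T w x z)) - (m z (T w x y))" using P2[rule_format, where x=w and y=x and z=y and w=z] by simp
    have e3: "(T w (commC m y z) x) - (T (m z w) y x) + (T (m y w) z x) = 0" using P1[rule_format, where x=y and y=z and z=w and w=x] by simp
    have e4: "(m (braceD m T y z x) w) + (m (T y z x) w) - (m (T z y x) w) = (braceD m T y z (m x w)) - (m x (braceD m T y z w))" using P5[rule_format, where x=y and y=z and z=x and w=w] by simp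
    have e5: "(m (braceD m T x z y) w) + (m (T x z y) w) - (m (T z x y) w) = (braceD m T x z (m y w)) - (m y (braceD m T x z w))" using P5[rule_format, where x=x and y=z and z=y and w=w] by simp
    have e6: "(m (braceD m T x y z) w) + (m (T x y z) w) - (m (T y x z) w) = (braceD m T x y (m z w)) - (m z (braceD m T x y w))" using P5[rule_format, where x=x and y=y and z=z and w=w] by simp
    have e7: "(T w y (commC m x z)) = (m x (T w y z)) - (m z (T w y x))" using P2[rule_format, where x=w and y=y and z=x and w=z] by simp
    have e8: "(T w (commC m x z) y) - (T (m z w) x y) + (T (m x w) z y) = 0" using P1[rule_format, where x=x and y=z and z=w and w=y] by simp
    have "braceD m T (commC m x y) z w + braceD m T (commC m y z) x w + braceD m T (commC m z x) y w = ((T w z (commC m x y)) - ((m x (T w z y)) - (m y (T w z x)))) - ((T w (commC m x y) z) - (T (m y w) x z) + (T (m x w) y z) - (0)) + ((T w x (commC m y z)) - ((m y (T w x z)) - (m z (T w x y)))) - ((T w (commC m y z) x) - (T (m z w) y x) + (T (m y w) z x) - (0)) + ((m (braceD m T y z x) w) + (m (T y z x) w) - (m (T z y x) w) - ((braceD m T y z (m x w)) - (m x (braceD m T y z w)))) - ((m (braceD m T x z y) w) + (m (T x z y) w) - (m (T z x y) w) - ((braceD m T x z (m y w)) - (m y (braceD m T x z w)))) + ((m (braceD m T x y z) w) + (m (T x y z) w) - (m (T y x z) w) - ((braceD m T x y (m z w)) - (m z (braceD m T x y w)))) - ((T w y (commC m x z)) - ((m x (T w y z)) - (m z (T w y x))))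 + ((T w (commC m x z) y) - (T (m z w) x y) + (T (m x w) z y) - (0))"
      unfolding braceD_def commC_def assoc3_def by (simp add: lin algebra_simps)
    then show "braceD m T (commC m x y) z w + braceD m T (commC m y z) x w + braceD m T (commC m z x) y w = 0" using e0 e1 e2 e3 e4 e5 e6 e7 e8 by simp
  qed
  have B: "\<forall>x y z w t. braceD m T x y (braceD m T z w t) - braceD m T (braceD m T x y z) w t - braceD m T (T x y z) w t + braceD m T (T y x z) w t - braceD m T z (braceD m T x y w) t - braceD m T z (T x y w) t + braceD m T z (T y x w) t - braceD m T z w (braceD m T x y t) = 0"
  proof (intro allI)
    fix x y z w t
    have e0: "(T t (braceD m T x y z) w) + (T t (T x y z) w) - (T t (T y x z) w) + (T t z (braceD m T x y w)) + (T t z (T x y w)) - (T t z (T y x w)) = (braceD m T x y (T t z w)) - (T (braceD m T x y t) z w)" using P4[rule_format, where x=x and y=y and z=t and w=z and t=w] by simp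
    have e1: "(m w ((m (braceD m T x y z) t) + (m (T x y z) t) - (m (T y x z) t))) = (m w ((braceD m T x y (m z t)) - (m z (braceD m T x y t))))" using P5[rule_format, where x=x and y=y and z=z and w=t] by simp
    have e2: "(m ((m (braceD m T x y z) w) + (m (T x y z) w) - (m (T y x z) w)) t) = (m ((braceD m T x y (m z w)) - (m z (braceD m T x y w))) t)" using P5[rule_format, where x=x and y=y and z=z and w=w] by simp
    have e3: "(m (braceD m T x y (m z w)) t) + (m (T x y (m z w)) t) - (m (T y x (m z w)) t) = (braceD m T x y (m (m z w) t)) - (m (m z w) (braceD m T x y t))" using P5[rule_format, where x=x and y=y and z="(m z w)" and w=t] by simp
    have e4: "(m ((T x y (commC m z w))) t) = (m ((m z (T x y w)) - (m w (T x y z))) t)" using P2[rule_format, where x=x and y=y and z=z and w=w] by simp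
    have e5: "(m (braceD m T x y z) (m w t)) + (m (T x y z) (m w t)) - (m (T y x z) (m w t)) = (braceD m T x y (m z (m w t))) - (m z (braceD m T x y (m w t)))" using P5[rule_format, where x=x and y=y and z=z and w="(m w t)"] by simp
    have e6: "(T t (braceD m T x y w) z) + (T t (T x y w) z) - (T t (T y x w) z) + (T t w (braceD m T x y z)) + (T t w (T x y z)) - (T t w (T y x z)) = (braceD m T x y (T t w z)) - (T (braceD m T x y t) w z)" using P4[rule_format, where x=x and y=y and z=t and w=w and t=z] by simp
    have e7: "(m (braceD m T x y (m w z)) t) + (m (T x y (m w z)) t) - (m (T y x (m w z)) t) = (braceD m T x y (m (m w z) t)) - (m (m w z) (braceD m T x y t))" using P5[rule_format, where x=x and y=y and z="(m w z)" and w=t] by simp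
    have e8: "(m ((T y x (commC m z w))) t) = (m ((m z (T y x w)) - (m w (T y x z))) t)" using P2[rule_format, where x=y and y=x and z=z and w=w] by simp
    have e9: "(m ((m (braceD m T x y w) z) + (m (T x y w) z) - (m (T y x w) z)) t) = (m ((braceD m T x y (m w z)) - (m w (braceD m T x y z))) t)" using P5[rule_format, where x=x and y=y and z=w and w=z] by simp
    have e10: "(m (braceD m T x y w) (m z t)) + (m (T x y w) (m z t)) - (m (T y x w) (m z t)) = (braceD m T x y (m w (m z t))) - (m w (braceD m T x y (m z t)))" using P5[rule_format, where x=x and y=y and z=w and w="(m z t)"] by simp
    have e11: "(m z ((m (braceD m T x y w) t) + (m (T x y w) t) - (m (T y x w) t))) = (m z ((braceD m T x y (m w t)) - (m w (braceD m T x y t))))" using P5[rule_format, where x=x and y=y and z=w and w=t] by simp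
    have "braceD m T x y (braceD m T z w t) - braceD m T (braceD m T x y z) w t - braceD m T (T x y z) w t + braceD m T (T y x z) w t - braceD m T z (braceD m T x y w) t - braceD m T z (T x y w) t + braceD m T z (T y x w) t - braceD m T z w (braceD m T x y t) = ((T t (braceD m T x y z) w) + (T t (T x y z) w) - (T t (T y x z) w) + (T t z (braceD m T x y w)) + (T t z (T x y w)) - (T t z (T y x w)) - ((braceD m T x y (T t z w)) - (T (braceD m T x y t) z w))) + ((m w ((m (braceD m T x y z) t) + (m (T x y z) t) - (m (T y x z) t))) - ((m w ((braceD m T x y (m z t)) - (m z (braceD m T x y t)))))) + ((m ((m (braceD m T x y z) w) + (m (T x y z) w) - (m (T y x z) w)) t) - ((m ((braceD m T x y (m z w)) - (m z (braceD m T x y w))) t))) + ((m (braceD m T x y (m z w)) t) + (m (T x y (m z w)) t) - (m (T y x (m z w)) t) - ((braceD m T x y (m (m z w) t)) - (m (m z w) (braceD m T x y t)))) - ((m ((T x y (commC m z w))) t) - ((m ((m z (T x y w)) - (m w (T x y z))) t))) - ((m (braceD m T x y z) (m w t)) + (m (T x y z) (m w t)) - (m (T y x z) (m w t)) - ((braceD m T x y (m z (m w t))) - (m z (braceD m T x y (m w t))))) - ((T t (braceD m T x y w) z) + (T t (T x y w) z) - (T t (T y x w) z) + (T t w (braceD m T x y z)) + (T t w (T x y z)) - (T t w (T y x z)) - ((braceD m T x y (T t w z)) - (T (braceD m T x y t) w z))) - ((m (braceD m T x y (m w z)) t) + (m (T x y (m w z)) t) - (m (T y x (m w z)) t) - ((braceD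 m T x y (m (m w z) t)) - (m (m w z) (braceD m T x y t)))) + ((m ((T y x (commC m z w))) t) - ((m ((m z (T y x w)) - (m w (T y x z))) t))) - ((m ((m (braceD m T x y w) z) + (m (T x y w) z) - (m (T y x w) z)) t) - ((m ((braceD m T x y (m w z)) - (m w (braceD m T x y z))) t))) + ((m (braceD m T x y w) (m z t)) + (m (T x y w) (m z t)) - (m (T y x w) (m z t)) - ((braceD m T x y (m w (m z t))) - (m w (braceD m T x y (m z t))))) - ((m z ((m (braceD m T x y w) t) + (m (T x y w) t) - (m (T y x w) t))) - ((m z ((braceD m T x y (m w t)) - (m w (braceD m T x y t))))))"
      unfolding braceD_def commC_def assoc3_def by (simp add: lin algebra_simps)
    then show "braceD m T x y (braceD m T z w t) - braceD m T (braceD m T x y z) w t - braceD m T (T x y z) w t + braceD m T (T y x z) w t - braceD m T z (braceD m T x y w) t - braceD m T z (T x y w) t + braceD m T z (T y x w) t - braceD m T z w (braceD m T x y t) = 0" using e0 e1 e2 e3 e4 e5 e6 e7 e8 e9 e10 e11 by simp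
  qed
  show ?thesis using A B by blast
qed

end
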